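(* Let $\mathbb K$ be a field of characteristic $p>0$ and let $x\in\mathbb K$ be transcendental over $\mathbb F_p$. Let $V=\mathbb K^3$, let $\sigma$ be the automorphism of $V$ with matrix $\mathrm{diag}(x+1,\,x,\,1)$, let $L$ be the span of $(1,1,1)^T$ and $R$ the span of $(1,1,0)^T$ and $(1,0,1)^T$. Then the $6$-generated quadratic algebra $A=A(V,L,R,\sigma)$ has Hilbert function $$h_A(n+3)=\begin{cases}11,& n=p^k\text{ for some }k\ge0,\\10,&\text{otherwise},\end{cases}\qquad(n\ge0),$$ which is not eventually periodic; hence the Hilbert series of $A$ is not rational.
   Context: Let $V$ have basis $X=\{x_1,x_2,x_3\}$ (the standard basis of $\mathbb K^3$). The algebra $A(V,L,R,\sigma)$ is the associative $\mathbb K$-algebra generated by $Y=X\cup\{a,b,c\}$ (all of degree $1$; $V$ is identified with the span of $x_1,x_2,x_3$ in degree one of the free algebra) subject to the homogeneous quadratic relations: $x_ix_j$ for all $i,j$; $ya$ and $by$ for all $y\in Y$; $a\ell$ for all $\ell\in L$; $\rho b$ for all $\rho\in R$; and $x_ic-c\,\sigma(x_i)$ for $i=1,2,3$. $h_A(n)=\dim A_n$. *)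

theory Defs
  imports Main "HOL-Library.Function_Algebras" "HOL-Computational_Algebra.Polynomial_FPS"
begin

datatype gen = X1 | X2 | X3 | GA | GB | GC

text \<open>Elements of the free associative algebra K<Y> are represented as coefficient
  functions on words (lists of generators), with finite support.\<close>
type_synonym 'a fa = "gen list \<Rightarrow> 'a"

definition fa_scale :: "'a::field \<Rightarrow> 'a fa \<Rightarrow> 'a fa" where
  "fa_scale c f = (\<lambda>w. c * f w)"

definition fa_mult :: "'a::field fa \<Rightarrow> 'a fa \<Rightarrow> 'a fa" where
  "fa_mult f g = (\<lambda>w. \<Sum>i\<le>length w. f (take i w) * g (drop i w))"

definition fa_word :: "gen list \<Rightarrow> 'a::field fa" where
  "fa_word u = (\<lambda>w. if w = u then 1 else 0)"

text \<open>Vectors of V = K^3 are triples; lin v is v viewed in degree 1 (x_i = e_i).\<close>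
definition lin :: "'a::field \<times> 'a \<times> 'a \<Rightarrow> 'a fa" where
  "lin v = (\<lambda>w. if w = [X1] then fst v else if w = [X2] then fst (snd v)
              else if w = [X3] then snd (snd v) else 0)"

definition xvar :: "nat \<Rightarrow> gen" where
  "xvar i = (if i = 1 then X1 else if i = 2 then X2 else X3)"

definition evec :: "nat \<Rightarrow> 'a::field \<times> 'a \<times> 'a" where
  "evec i = (if i = 1 then (1,0,0) else if i = 2 then (0,1,0) else (0,0,1))"

definition rels :: "('a::field \<times> 'a \<times> 'a) set \<Rightarrow> ('a \<times> 'a \<times> 'a) set
    \<Rightarrow> ('a \<times> 'a \<times> 'a \<Rightarrow> 'a \<times> 'a \<times> 'a) \<Rightarrow> 'a fa set" where
  "rels L R \<sigma> =
     {fa_word [xvar i, xvar j] | i j. i \<in> {1,2,3} \<and> j \<in> {1,2,3}}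
   \<union> {fa_word [y, GA] | y. True}
   \<union> {fa_word [GB, y] | y. True}
   \<union> {fa_mult (fa_word [GA]) (lin l) | l. l \<in> L}
   \<union> {fa_mult (lin \<rho>) (fa_word [GB]) | \<rho>. \<rho> \<in> R}
   \<union> {fa_mult (lin (evec i)) (fa_word [GC]) - fa_mult (fa_word [GC]) (lin (\<sigma> (evec i)))
        | i. i \<in> {1,2,3}}"

definition free_deg :: "nat \<Rightarrow> 'a::field fa set" where
  "free_deg n = {f. \<forall>w. length w \<noteq> n \<longrightarrow> f w = 0}"

definition ideal_deg :: "'a::field fa set \<Rightarrow> nat \<Rightarrow> 'a fa set" where
  "ideal_deg Rel n = module.span fa_scale
     {fa_mult (fa_word u) (fa_mult r (fa_word v)) | u r v.
        r \<in> Rel \<and> length u + 2 + length v = n}"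

text \<open>h_A(n) = dim A_n = dim (F_n / I_n) = dim F_n - dim I_n.\<close>
definition hilbA :: "('a::field \<times> 'a \<times> 'a) set \<Rightarrow> ('a \<times> 'a \<times> 'a) set
    \<Rightarrow> ('a \<times> 'a \<times> 'a \<Rightarrow> 'a \<times> 'a \<times> 'a) \<Rightarrow> nat \<Rightarrow> nat" where
  "hilbA L R \<sigma> n = vector_space.dim fa_scale (free_deg n :: 'a fa set)
                    - vector_space.dim fa_scale (ideal_deg (rels L R \<sigma>) n)"

end

theory Submission
  imports Defs "HOL-Computational_Algebra.Euclidean_Algorithm" "HOL-Computational_Algebra.Primes"
begin

lemma UNIV_gen: "(UNIV :: gen set) = {X1,X2,X3,GA,GB,GC}"
  by (auto intro: gen.exhaust)

lemma finite_words: "finite {w :: gen list. length w = m}"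
proof -
  have "finite (UNIV :: gen set)" by (simp add: UNIV_gen)
  then have "finite {xs :: gen list. set xs \<subseteq> UNIV \<and> length xs = m}" by (rule finite_lists_length_eq)
  then show ?thesis by simp
qed

interpretation fa: vector_space "fa_scale :: 'a::field \<Rightarrow> 'a fa \<Rightarrow> 'a fa"
  by unfold_locales (auto simp: fa_scale_def fun_eq_iff algebra_simps)

lemma take_drop_eq_iff: "i \<le> length w \<Longrightarrow> (take i w = u \<and> drop i w = v) \<longleftrightarrow> (i = length u \<and> w = u @ v)"
proof
  assume i: "i \<le> length w" and h: "take i w = u \<and> drop i w = v"
  then have "w = u @ v" by (metis append_take_drop_id)
  moreover have "i = length u" using i h by auto
  ultimately show "i = length u \<and> w = u @ v" by simp
next
  assume "i = length u \<and> w = u @ v"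
  then show "take i w = u \<and> drop i w = v" by simp
qed

lemma fa_mult_word_word: "fa_mult (fa_word u) (fa_word v) = (fa_word (u @ v) :: 'a::field fa)"
proof
  fix w :: "gen list"
  have "fa_mult (fa_word u) (fa_word v) w = (\<Sum>i\<le>length w. if i = length u \<and> w = u @ v then 1 else 0)"
    unfolding fa_mult_def fa_word_def
    by (intro sum.cong refl) (use take_drop_eq_iff in auto)
  also have "\<dots> = fa_word (u @ v) w"
    by (auto simp: fa_word_def)
  finally show "fa_mult (fa_word u) (fa_word v) w = fa_word (u @ v) w" .
qed

lemma fa_mult_word_left: "fa_mult (fa_word u) h w = (if take (length u) w = u then h (drop (length u) w) else (0::'a::field))"
proof -
  have "fa_mult (fa_word u) h w = (\<Sum>i\<le>length w. if i = length u then (if take (length u) w = u then h (drop (length u) w) else 0) else 0)"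
    unfolding fa_mult_def fa_word_def
    by (intro sum.cong refl) auto
  also have "\<dots> = (if take (length u) w = u then h (drop (length u) w) else 0)"
    by (auto simp: sum.delta' dest: arg_cong[where f=length])
  finally show ?thesis .
qed

lemma take_app_eq: assumes h: "take (length a) x @ take (length b) (drop (length a) x) = a @ b" shows "take (length a) x = a"
proof (cases "length a \<le> length x")
  case True
  then have "length (take (length a) x) = length a" by simp
  then show ?thesis using h by (simp add: append_eq_append_conv)
next
  case False
  then have "x = a @ b" using h by simp
  then show ?thesis by simp
qed

lemma fa_mult_assoc_word: "fa_mult (fa_word a) (fa_mult (fa_word b) X) = fa_mult (fa_word (a @ b)) (X :: 'a::field fa)"
  by (rule ext) (auto simp: fa_mult_word_left take_add add.commute dest: take_app_eq)

lemma fa_mult_add_left: "fa_mult (f + g) h = fa_mult f h + (fa_mult g h :: 'a::field fa)"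
  by (rule ext) (simp add: fa_mult_def sum.distrib algebra_simps)
lemma fa_mult_add_right: "fa_mult h (f + g) = fa_mult h f + (fa_mult h g :: 'a::field fa)"
  by (rule ext) (simp add: fa_mult_def sum.distrib algebra_simps)
lemma fa_mult_diff_left: "fa_mult (f - g) h = fa_mult f h - (fa_mult g h :: 'a::field fa)"
  by (rule ext) (simp add: fa_mult_def sum_subtractf algebra_simps)
lemma fa_mult_diff_right: "fa_mult h (f - g) = fa_mult h f - (fa_mult h g :: 'a::field fa)"
  by (rule ext) (simp add: fa_mult_def sum_subtractf algebra_simps)
lemma fa_mult_scale_left: "fa_mult (fa_scale c f) h = fa_scale c (fa_mult f h :: 'a::field fa)"
  by (rule ext) (simp add: fa_mult_def fa_scale_def sum_distrib_left algebra_simps)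
lemma fa_mult_scale_right: "fa_mult h (fa_scale c f) = fa_scale c (fa_mult h f :: 'a::field fa)"
  by (rule ext) (simp add: fa_mult_def fa_scale_def sum_distrib_left algebra_simps)

lemmas fa_mult_simps = fa_mult_add_left fa_mult_add_right fa_mult_diff_left fa_mult_diff_right
  fa_mult_scale_left fa_mult_scale_right fa_mult_word_word

lemma lin_expand: "lin (a, b, c) = fa_scale a (fa_word [X1]) + fa_scale b (fa_word [X2]) + (fa_scale c (fa_word [X3]) :: 'a::field fa)"
  by (rule ext) (auto simp: lin_def fa_scale_def fa_word_def)


definition sig :: "'a::field \<Rightarrow> 'a \<times> 'a \<times> 'a \<Rightarrow> 'a \<times> 'a \<times> 'a" where
  "sig x = (\<lambda>(v1, v2, v3). ((x + 1) * v1, x * v2, v3))"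
definition Ls :: "('a::field \<times> 'a \<times> 'a) set" where "Ls = {(c, c, c) | c. True}"
definition Rs :: "('a::field \<times> 'a \<times> 'a) set" where "Rs = {(c + d, c, d) | c d. True}"
definition lam :: "'a::field \<Rightarrow> nat \<Rightarrow> 'a" where
  "lam x i = (if i = 1 then x + 1 else if i = 2 then x else 1)"

abbreviation Rel :: "'a::field \<Rightarrow> 'a fa set" where "Rel x \<equiv> rels Ls Rs (sig x)"
abbreviation Id :: "'a::field \<Rightarrow> nat \<Rightarrow> 'a fa set" where "Id x m \<equiv> ideal_deg (Rel x) m"

lemma fa_zero_eta[simp]: "(\<lambda>a. 0) = (0::'a::field fa)" by (simp add: fun_eq_iff)
lemma fa_scale_one[simp]: "fa_scale 1 f = f" by (simp add: fa_scale_def)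
lemma fa_scale_zero[simp]: "fa_scale 0 f = 0" by (simp add: fa_scale_def fun_eq_iff)
lemma fa_scale_zero_right[simp]: "fa_scale c 0 = (0::'a::field fa)" by (simp add: fa_scale_def fun_eq_iff)
lemma fa_mult_zero_right[simp]: "fa_mult f 0 = (0::'a::field fa)" by (simp add: fa_mult_def fun_eq_iff)
lemma fa_mult_zero_left[simp]: "fa_mult 0 f = (0::'a::field fa)" by (simp add: fa_mult_def fun_eq_iff)

lemma Id_gen: "r \<in> Rel x \<Longrightarrow> length u + 2 + length v = m \<Longrightarrow>
   fa_mult (fa_word u) (fa_mult r (fa_word v)) \<in> Id x m"
  unfolding ideal_deg_def by (rule fa.span_base) blast

lemma Id_word: "fa_word s \<in> Rel x \<Longrightarrow> length s = 2 \<Longrightarrow> length u + 2 + length v = m \<Longrightarrow>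
   fa_word (u @ s @ v) \<in> Id x m"
  using Id_gen[of "fa_word s" x u v m] by (simp add: fa_mult_word_word)

lemma rel_xx: "i \<in> {1,2,3} \<Longrightarrow> j \<in> {1,2,3} \<Longrightarrow> fa_word [xvar i, xvar j] \<in> Rel x"
  unfolding rels_def by blast
lemma rel_ya: "fa_word [y, GA] \<in> Rel x"
  unfolding rels_def by blast
lemma rel_by: "fa_word [GB, y] \<in> Rel x"
  unfolding rels_def by blast

lemma rel_al: "fa_word [GA,X1] + fa_word [GA,X2] + fa_word [GA,X3] \<in> Rel x"
proof -
  have "(1,1,1) \<in> (Ls :: ('a \<times> 'a \<times> 'a) set)" by (auto simp: Ls_def)
  then have "fa_mult (fa_word [GA]) (lin (1,1,1)) \<in> Rel x" unfolding rels_def by blast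
  then show ?thesis by (simp add: lin_expand fa_mult_simps)
qed

lemma rel_rb2: "fa_word [X1,GB] + fa_word [X2,GB] \<in> Rel x"
proof -
  have "(1,1,0) \<in> (Rs :: ('a \<times> 'a \<times> 'a) set)" by (auto simp: Rs_def intro: exI[of _ 1] exI[of _ 0])
  then have "fa_mult (lin (1,1,0)) (fa_word [GB]) \<in> Rel x" unfolding rels_def by blast
  then show ?thesis by (simp add: lin_expand fa_mult_simps)
qed

lemma rel_rb3: "fa_word [X1,GB] + fa_word [X3,GB] \<in> Rel x"
proof -
  have "(1,0,1) \<in> (Rs :: ('a \<times> 'a \<times> 'a) set)" unfolding Rs_def
    by (rule CollectI, rule exI[of _ 0], rule exI[of _ 1]) simp
  then have "fa_mult (lin (1,0,1)) (fa_word [GB]) \<in> Rel x" unfolding rels_def by blast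
  then show ?thesis by (simp add: lin_expand fa_mult_simps)
qed

lemma rel_comm: "i \<in> {1,2,3} \<Longrightarrow> fa_word [xvar i, GC] - fa_scale (lam x i) (fa_word [GC, xvar i]) \<in> Rel x"
proof -
  assume i: "i \<in> {1,2,3}"
  then have "fa_mult (lin (evec i)) (fa_word [GC]) - fa_mult (fa_word [GC]) (lin (sig x (evec i))) \<in> Rel x"
    unfolding rels_def by blast
  moreover have "fa_mult (lin (evec i)) (fa_word [GC]) - fa_mult (fa_word [GC]) (lin (sig x (evec i)))
     = fa_word [xvar i, GC] - fa_scale (lam x i) (fa_word [GC, xvar i])"
    using i by (auto simp: evec_def sig_def lin_expand fa_mult_simps lam_def xvar_def)
  ultimately show ?thesis by simp
qed

lemma Id_left: assumes "f \<in> Id x m" shows "fa_mult (fa_word [g]) f \<in> Id x (Suc m)"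
  using assms unfolding ideal_deg_def
proof (induction rule: fa.span_induct_alt)
  case base
  then show ?case by (simp add: fa.span_zero)
next
  case (step c y z)
  then obtain u r v where y: "y = fa_mult (fa_word u) (fa_mult r (fa_word v))" "r \<in> Rel x"
     "length u + 2 + length v = m" by blast
  have "fa_mult (fa_word [g]) y = fa_mult (fa_word (g # u)) (fa_mult r (fa_word v))"
    by (simp add: y fa_mult_assoc_word)
  then have "fa_mult (fa_word [g]) y \<in> Id x (Suc m)" using Id_gen[of r x "g#u" v "Suc m"] y by simp
  have e: "fa_mult (fa_word [g]) (fa_scale c y + z) = fa_scale c (fa_mult (fa_word [g]) y) + fa_mult (fa_word [g]) z"
    by (simp only: fa_mult_simps)
  show ?case unfolding e
    by (rule fa.span_add[OF fa.span_scale]) (use \<open>fa_mult (fa_word [g]) y \<in> Id x (Suc m)\<close> step(2) in \<open>auto simp: ideal_deg_def\<close>)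
qed

lemma Id_diff_trans: "a - b \<in> Id x m \<Longrightarrow> b - c \<in> Id x m \<Longrightarrow> a - c \<in> Id x m"
  unfolding ideal_deg_def using fa.span_add by fastforce

lemma Id_scale: "a \<in> Id x m \<Longrightarrow> fa_scale c a \<in> Id x m"
  unfolding ideal_deg_def by (rule fa.span_scale)
lemma Id_add: "a \<in> Id x m \<Longrightarrow> b \<in> Id x m \<Longrightarrow> a + b \<in> Id x m"
  unfolding ideal_deg_def by (rule fa.span_add)
lemma Id_diff: "a \<in> Id x m \<Longrightarrow> b \<in> Id x m \<Longrightarrow> a - b \<in> Id x m"
  unfolding ideal_deg_def by (rule fa.span_diff)
lemma Id_zero: "0 \<in> Id x m"
  unfolding ideal_deg_def by (rule fa.span_zero)

lemma fa_scale_diff: "fa_scale c (a - b) = fa_scale c a - fa_scale c (b :: 'a::field fa)"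
  by (simp add: fa_scale_def fun_eq_iff algebra_simps)
lemma fa_scale_add: "fa_scale c (a + b) = fa_scale c a + fa_scale c (b :: 'a::field fa)"
  by (simp add: fa_scale_def fun_eq_iff algebra_simps)
lemma fa_scale_scale: "fa_scale c (fa_scale d a) = fa_scale (c * d) (a :: 'a::field fa)"
  by (simp add: fa_scale_def fun_eq_iff algebra_simps)

lemma comm_shift:
  assumes i: "i \<in> {1,2,3}"
  shows "fa_word (u @ xvar i # replicate k GC @ t) - fa_scale (lam x i ^ k) (fa_word (u @ replicate k GC @ xvar i # t))
         \<in> Id x (length u + k + 1 + length t)"
proof (induction k arbitrary: u)
  case 0
  then show ?case by (simp add: Id_zero)
next
  case (Suc k)
  have g: "fa_word (u @ [xvar i, GC] @ (replicate k GC @ t)) - fa_scale (lam x i) (fa_word (u @ [GC, xvar i] @ (replicate k GC @ t)))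
       \<in> Id x (length u + Suc k + 1 + length t)"
    using Id_gen[OF rel_comm[OF i], where u=u and v="replicate k GC @ t" and x=x and m="length u + Suc k + 1 + length t"]
    by (simp add: fa_mult_simps)
  have ih: "fa_word ((u @ [GC]) @ xvar i # replicate k GC @ t) - fa_scale (lam x i ^ k) (fa_word ((u @ [GC]) @ replicate k GC @ xvar i # t))
         \<in> Id x (length u + Suc k + 1 + length t)"
    using Suc.IH[where u="u @ [GC]"] by (simp add: fun_diff_def)
  have "fa_scale (lam x i) (fa_word (u @ [GC, xvar i] @ (replicate k GC @ t))) -
        fa_scale (lam x i ^ Suc k) (fa_word (u @ replicate (Suc k) GC @ xvar i # t)) \<in> Id x (length u + Suc k + 1 + length t)"
    using Id_scale[OF ih, of "lam x i"] by (simp add: fa_scale_diff fa_scale_scale replicate_app_Cons_same)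
  from Id_diff_trans[OF g this] show ?case by (simp add: fun_diff_def)
qed


type_synonym mono = "bool \<times> nat \<times> nat \<times> bool"

fun ne :: "mono \<Rightarrow> bool" where "ne (a,k,i,b) = (a \<or> k > 0 \<or> i \<noteq> 0 \<or> b)"
fun oplus :: "mono \<Rightarrow> mono \<Rightarrow> mono" where
  "oplus (a1,k1,i1,b1) (a2,k2,i2,b2) = (a1 \<or> a2, k1 + k2, if i1 = 0 then i2 else i1, b1 \<or> b2)"
fun kap :: "'a::field \<Rightarrow> mono \<Rightarrow> mono \<Rightarrow> 'a" where
  "kap x (a1,k1,i1,b1) (a2,k2,i2,b2) =
     (if (b1 \<and> ne (a2,k2,i2,b2)) \<or> (a2 \<and> ne (a1,k1,i1,b1)) \<or> (i1 \<noteq> 0 \<and> i2 \<noteq> 0) then 0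
      else if i1 \<noteq> 0 then lam x i1 ^ k2 else 1)"
definition mul :: "'a::field \<Rightarrow> 'a \<times> mono \<Rightarrow> 'a \<times> mono \<Rightarrow> 'a \<times> mono" where
  "mul x P Q = (fst P * fst Q * kap x (snd P) (snd Q), oplus (snd P) (snd Q))"
fun gm :: "gen \<Rightarrow> mono" where
  "gm X1 = (False,0,1,False)" | "gm X2 = (False,0,2,False)" | "gm X3 = (False,0,3,False)"
| "gm GA = (True,0,0,False)" | "gm GB = (False,0,0,True)" | "gm GC = (False,1,0,False)"
fun mon :: "'a::field \<Rightarrow> gen list \<Rightarrow> 'a \<times> mono" where
  "mon x [] = (1, (False,0,0,False))"
| "mon x (g # w) = mul x (1, gm g) (mon x w)"

fun nw :: "mono \<Rightarrow> gen list" where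
  "nw (a,k,i,b) = (if a then [GA] else []) @ replicate k GC @ (if i = 0 then [] else [xvar i]) @ (if b then [GB] else [])"
fun deg :: "mono \<Rightarrow> nat" where
  "deg (a,k,i,b) = (if a then 1 else 0) + k + (if i = 0 then 0 else 1) + (if b then 1 else 0)"

lemma length_nw: "length (nw M) = deg M"
  by (cases M) auto

lemma mul_unit: "mul x (1, (False,0,0,False)) P = P"
  by (cases P) (auto simp: mul_def)

lemma kap_assoc: "kap x P Q * kap x (oplus P Q) R = kap x Q R * kap x P (oplus Q R)"
  by (cases P; cases Q; cases R) (auto simp: power_add)

lemma oplus_assoc: "oplus (oplus P Q) R = oplus P (oplus Q R)"
  by (cases P; cases Q; cases R) auto

lemma mul_assoc: "mul x (mul x P Q) R = mul x P (mul x Q R)"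
proof -
  have "fst P * fst Q * kap x (snd P) (snd Q) * fst R * kap x (oplus (snd P) (snd Q)) (snd R)
      = fst P * (fst Q * fst R * kap x (snd Q) (snd R)) * kap x (snd P) (oplus (snd Q) (snd R))"
    using kap_assoc[of x "snd P" "snd Q" "snd R"] by (simp add: algebra_simps)
  then show ?thesis by (simp add: mul_def oplus_assoc)
qed

lemma mon_append: "mon x (u @ v) = mul x (mon x u) (mon x v)"
  by (induction u) (simp_all add: mul_unit mul_assoc)

lemma mon_i_le3: "fst (snd (snd (snd (mon x w)))) \<le> 3"
proof (induction w)
  case Nil then show ?case by simp
next
  case (Cons g w)
  obtain l a k i b where m: "mon x w = (l,a,k,i,b)" by (cases "mon x w") auto
  show ?case using Cons m by (cases g) (auto simp: mul_def)
qed

lemma deg_oplus: "kap x M N \<noteq> 0 \<Longrightarrow> deg (oplus M N) = deg M + deg N"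
  by (cases M; cases N) (auto split: if_splits)

lemma mon_deg: "fst (mon x w) \<noteq> 0 \<Longrightarrow> deg (snd (mon x w)) = length w"
proof (induction w)
  case Nil then show ?case by simp
next
  case (Cons g w)
  then have "fst (mon x w) \<noteq> 0" "kap x (gm g) (snd (mon x w)) \<noteq> 0" by (auto simp: mul_def)
  with Cons show ?case by (simp add: mul_def deg_oplus) (cases g; simp)
qed

lemma gm_xvar: "j \<in> {1,2,3} \<Longrightarrow> gm (xvar j) = (False,0,j,False)"
  by (auto simp: xvar_def)

lemma fa_word_diff_self: "fa_word w - fa_word w = (0 :: 'a::field fa)" by simp

lemma red_zero: "fa_word (g # nw M) \<in> Id x m \<Longrightarrow> fst (mul x (1, gm g) (1, M)) = 0 \<Longrightarrow>
  fa_word (g # nw M) - fa_scale (fst (mul x (1, gm g) (1, M))) (fa_word (nw (snd (mul x (1, gm g) (1, M))))) \<in> Id x m"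
  by simp

lemma red_id: "nw (snd (mul x (1, gm g) (1, M))) = g # nw M \<Longrightarrow> fst (mul x (1, gm g) (1, M)) = 1 \<Longrightarrow>
  fa_word (g # nw M) - fa_scale (fst (mul x (1, gm g) (1, M))) (fa_word (nw (snd (mul x (1, gm g) (1, M))))) \<in> Id x m"
  by (simp add: Id_zero)

lemma red_base:
  assumes M: "M = (a,k,i,b)" "i \<le> 3"
  shows "fa_word (g # nw M) - fa_scale (fst (mul x (1, gm g) (1, M))) (fa_word (nw (snd (mul x (1, gm g) (1, M)))))
     \<in> Id x (Suc (deg M))"
proof -
  define bs where "bs = (if b then [GB] else [])"
  have lbs: "length bs = (if b then 1 else 0)" by (simp add: bs_def)
  have xcase: "fa_word (xvar j # nw M) - fa_scale (fst (mul x (1, gm (xvar j)) (1, M))) (fa_word (nw (snd (mul x (1, gm (xvar j)) (1, M)))))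
     \<in> Id x (Suc (deg M))" if j: "j \<in> {1,2,3}" for j
  proof -
    note gj = gm_xvar[OF j]
    have j0: "j \<noteq> 0" using j by auto
    show ?thesis
  proof (cases a)
    case True
    have "fa_word ([] @ [xvar j, GA] @ tl (nw M)) \<in> Id x (Suc (deg M))"
      by (rule Id_word[OF rel_ya]) (use True M in \<open>auto simp: length_nw[symmetric]\<close>)
    then show ?thesis using True M j by (simp add: mul_def gj j0)
  next
    case False
    show ?thesis
    proof (cases "i = 0")
      case True
      have "fa_word ([] @ xvar j # replicate k GC @ bs) - fa_scale (lam x j ^ k) (fa_word ([] @ replicate k GC @ xvar j # bs))
         \<in> Id x (length ([]::gen list) + k + 1 + length bs)"
        by (rule comm_shift[OF j])
      then show ?thesis using True False M j by (cases b) (simp_all add: mul_def gj j0 bs_def)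
    next
      case False': False
      have i3: "i \<in> {1,2,3}" using False' M by auto
      have c1: "fa_word ([] @ xvar j # replicate k GC @ (xvar i # bs)) - fa_scale (lam x j ^ k) (fa_word ([] @ replicate k GC @ xvar j # (xvar i # bs)))
         \<in> Id x (length ([]::gen list) + k + 1 + length (xvar i # bs))"
        by (rule comm_shift[OF j])
      have c2: "fa_word (replicate k GC @ [xvar j, xvar i] @ bs) \<in> Id x (length (replicate k GC) + 2 + length bs)"
        by (rule Id_word[OF rel_xx[OF j i3]]) simp_all
      have "fa_word (xvar j # nw M) \<in> Id x (Suc (deg M))"
      proof -
        have "fa_word (xvar j # nw M) = (fa_word ([] @ xvar j # replicate k GC @ (xvar i # bs)) - fa_scale (lam x j ^ k) (fa_word ([] @ replicate k GC @ xvar j # (xvar i # bs))))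
           + fa_scale (lam x j ^ k) (fa_word (replicate k GC @ [xvar j, xvar i] @ bs))"
          using False M False' by (simp add: bs_def)
        moreover have "Suc (deg M) = length ([]::gen list) + k + 1 + length (xvar i # bs)"
          "Suc (deg M) = length (replicate k GC) + 2 + length bs" using False M False' by (auto simp: lbs)
        ultimately show ?thesis using c1 c2 by (metis Id_add Id_scale)
      qed
      then show ?thesis using False M False' j by (simp add: mul_def gj j0)
    qed
  qed
  qed
  show ?thesis
  proof (cases g)
    case X1 then show ?thesis using xcase[of 1] by (simp add: xvar_def)
  next
    case X2 then show ?thesis using xcase[of 2] by (simp add: xvar_def)
  next
    case X3 then show ?thesis using xcase[of 3] by (simp add: xvar_def)
  next
    case GA
    show ?thesis
    proof (cases a)
      case True
      have "fa_word ([] @ [GA, GA] @ tl (nw M)) \<in> Id x (Suc (deg M))"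
        by (rule Id_word[OF rel_ya]) (use True M in \<open>auto simp: length_nw[symmetric]\<close>)
      then show ?thesis using True M GA by (simp add: mul_def)
    next
      case False
      then show ?thesis using M GA by (intro red_id) (auto simp: mul_def)
    qed
  next
    case GC
    show ?thesis
    proof (cases a)
      case True
      have "fa_word ([] @ [GC, GA] @ tl (nw M)) \<in> Id x (Suc (deg M))"
        by (rule Id_word[OF rel_ya]) (use True M in \<open>auto simp: length_nw[symmetric]\<close>)
      then show ?thesis using True M GC by (simp add: mul_def)
    next
      case False
      then show ?thesis using M GC by (intro red_id) (auto simp: mul_def)
    qed
  next
    case GB
    show ?thesis
    proof (cases "ne M")
      case True
      then obtain y rest where yr: "nw M = y # rest" using M by (cases "nw M") (auto split: if_splits)
      have "fa_word ([] @ [GB, y] @ rest) \<in> Id x (Suc (deg M))"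
        by (rule Id_word[OF rel_by]) (use yr in \<open>auto simp: length_nw[symmetric]\<close>)
      moreover have "kap x (gm GB) M = 0" using True M by simp
      ultimately show ?thesis using yr GB by (simp add: mul_def)
    next
      case False
      then show ?thesis using M GB by (intro red_id) (auto simp: mul_def)
    qed
  qed
qed


declare nw.simps[simp del]

lemma red_word: "fa_word w - fa_scale (fst (mon x w)) (fa_word (nw (snd (mon x w)))) \<in> Id x (length w)"
proof (induction w)
  case Nil
  then show ?case by (simp add: Id_zero nw.simps)
next
  case (Cons g w)
  obtain l a k i b where m: "mon x w = (l,(a,k,i,b))" by (cases "mon x w") auto
  have mg: "mon x (g # w) = (l * fst (mul x (1, gm g) (1, (a,k,i,b))), snd (mul x (1, gm g) (1, (a,k,i,b))))"
    by (simp add: m mul_def)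
  have L: "fa_mult (fa_word [g]) (fa_word w - fa_scale l (fa_word (nw (a,k,i,b)))) \<in> Id x (Suc (length w))"
    using Id_left[OF Cons.IH[unfolded m]] by (simp add: fun_diff_def)
  have L': "fa_word (g # w) - fa_scale l (fa_word (g # nw (a,k,i,b))) \<in> Id x (Suc (length w))"
    using L by (simp add: fa_mult_simps)
  show ?case
  proof (cases "l = 0")
    case True
    then show ?thesis using L' by (simp add: mg fun_diff_def del: mon.simps)
  next
    case False
    have i3: "i \<le> 3" using mon_i_le3[of x w] m by simp
    have dg: "deg (a,k,i,b) = length w" using mon_deg[of x w] m False by simp
    have R: "fa_word (g # nw (a,k,i,b)) - fa_scale (fst (mul x (1, gm g) (1, (a,k,i,b)))) (fa_word (nw (snd (mul x (1, gm g) (1, (a,k,i,b))))))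
     \<in> Id x (Suc (length w))"
      using red_base[of "(a,k,i,b)" a k i b g x] i3 dg by simp
    have "fa_scale l (fa_word (g # nw (a,k,i,b))) - fa_scale (l * fst (mul x (1, gm g) (1, (a,k,i,b)))) (fa_word (nw (snd (mul x (1, gm g) (1, (a,k,i,b))))))
     \<in> Id x (Suc (length w))"
      using Id_scale[OF R, of l] by (simp add: fa_scale_diff fa_scale_scale)
    from Id_diff_trans[OF L' this] show ?thesis by (simp add: mg fun_diff_def del: mon.simps)
  qed
qed

definition eps :: "'a::field \<Rightarrow> nat \<Rightarrow> bool" where "eps x n = ((x + 1) ^ n = x ^ n + 1)"

definition BM :: "'a::field \<Rightarrow> nat \<Rightarrow> mono set" where
  "BM x n = {(False,n+3,0,False),(False,n+2,1,False),(False,n+2,2,False),(False,n+2,3,False),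
     (True,n+2,0,False),(True,n+1,1,False),(True,n+1,2,False),
     (False,n+2,0,True),(False,n+1,1,True),(True,n+1,0,True)} \<union> (if eps x n then {(True,n,1,True)} else {})"

definition BQ :: "'a::field \<Rightarrow> nat \<Rightarrow> 'a fa set" where
  "BQ x n = fa_word ` nw ` BM x n"

lemma BQ_I: "M \<in> BM x n \<Longrightarrow> fa_word (nw M) \<in> BQ x n"
  by (simp add: BQ_def)

abbreviation SS :: "'a::field \<Rightarrow> nat \<Rightarrow> 'a fa set" where
  "SS x n \<equiv> fa.span (Id x (n+3) \<union> BQ x n)"

lemma SS_Id: "f \<in> Id x (n+3) \<Longrightarrow> f \<in> SS x n"
  by (rule fa.span_base) simp
lemma SS_BM: "M \<in> BM x n \<Longrightarrow> fa_word (nw M) \<in> SS x n"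
  by (rule fa.span_base) (simp add: BQ_I)

lemma normal_in_SS:
  assumes "deg (a,k,i,b) = n + 3" "i \<le> 3"
  shows "fa_word (nw (a,k,i,b)) \<in> (SS x n :: 'a::field fa set)"
proof -
  note nw.simps[simp]
  have i: "i = 0 \<or> i = 1 \<or> i = 2 \<or> i = 3" using assms(2) by auto
  note sp = fa.span_add fa.span_diff fa.span_scale
  show ?thesis
  proof (cases a; cases b)
    assume a: a and b: b
    show ?thesis
    proof (cases "i = 0")
      case True then show ?thesis using assms a b by (intro SS_BM) (auto simp: BM_def)
    next
      case False
      then have k: "k = n" using assms a b by simp
      define W where "W j = (fa_word (GA # replicate n GC @ [xvar j, GB]) :: 'a fa)" for j
      have nwM: "nw (a,k,i,b) = GA # replicate n GC @ [xvar i, GB]" using False a b k by simp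
      have r2: "W 1 + W 2 \<in> Id x (n+3)"
        using Id_gen[OF rel_rb2, where u="GA # replicate n GC" and v="[]" and x=x and m="n+3"]
        by (simp add: fa_mult_simps W_def xvar_def)
      have r3: "W 1 + W 3 \<in> Id x (n+3)"
        using Id_gen[OF rel_rb3, where u="GA # replicate n GC" and v="[]" and x=x and m="n+3"]
        by (simp add: fa_mult_simps W_def xvar_def)
      show ?thesis
      proof (cases "eps x n")
        case True
        have "fa_word (nw (True,n,1,True)) \<in> SS x n" by (rule SS_BM) (simp add: BM_def True)
        then have w1: "W 1 \<in> SS x n" by (simp add: W_def xvar_def)
        have "W 2 = (W 1 + W 2) - W 1" "W 3 = (W 1 + W 3) - W 1" by simp_all
        then have "W 2 \<in> SS x n" "W 3 \<in> SS x n" using w1 r2 r3 by (metis SS_Id fa.span_diff)+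
        then show ?thesis using w1 i False nwM by (auto simp: W_def)
      next
        case False
        define A where "A j = (fa_word (GA # xvar j # replicate n GC @ [GB]) :: 'a fa)" for j
        have G: "A 1 + A 2 + A 3 \<in> Id x (n+3)"
          using Id_gen[OF rel_al, where u="[]" and v="replicate n GC @ [GB]" and x=x and m="n+3"]
          by (simp add: fa_mult_simps A_def xvar_def)
        have D: "A j - fa_scale (lam x j ^ n) (W j) \<in> Id x (n+3)" if "j \<in> {1,2,3}" for j
          using comm_shift[OF that, where u="[GA]" and k=n and t="[GB]" and x=x] by (simp add: A_def W_def eval_nat_numeral)
        define c where "c = (x + 1) ^ n - x ^ n - (1::'a)"
        have c0: "c \<noteq> 0" using False by (auto simp: c_def eps_def diff_eq_eq)
        have eq: "fa_scale c (W 1) = (A 1 + A 2 + A 3) - (A 1 - fa_scale (lam x 1 ^ n) (W 1))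
            - (A 2 - fa_scale (lam x 2 ^ n) (W 2)) - (A 3 - fa_scale (lam x 3 ^ n) (W 3))
            - fa_scale (x ^ n) (W 1 + W 2) - (W 1 + W 3)"
          by (simp add: fun_eq_iff fa_scale_def lam_def c_def algebra_simps)
        have "(A 1 + A 2 + A 3) - (A 1 - fa_scale (lam x 1 ^ n) (W 1))
            - (A 2 - fa_scale (lam x 2 ^ n) (W 2)) - (A 3 - fa_scale (lam x 3 ^ n) (W 3))
            - fa_scale (x ^ n) (W 1 + W 2) - (W 1 + W 3) \<in> Id x (n+3)"
          by (intro Id_diff Id_add Id_scale G D r2 r3) auto
        then have "fa_scale c (W 1) \<in> Id x (n+3)" unfolding eq[symmetric] .
        then have "fa_scale (inverse c) (fa_scale c (W 1)) \<in> Id x (n+3)" by (rule Id_scale)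
        then have w1: "W 1 \<in> Id x (n+3)" using c0 by (simp add: fa_scale_scale)
        have "W 2 = (W 1 + W 2) - W 1" "W 3 = (W 1 + W 3) - W 1" by simp_all
        then have "W 2 \<in> Id x (n+3)" "W 3 \<in> Id x (n+3)" using w1 r2 r3 by (metis Id_diff)+
        then show ?thesis using w1 i \<open>i \<noteq> 0\<close> nwM by (auto simp: W_def intro: SS_Id)
      qed
    qed
  next
    assume a: a and b: "\<not> b"
    show ?thesis
    proof (cases "i = 3")
      case False then show ?thesis using assms a b i by (intro SS_BM) (auto simp: BM_def)
    next
      case True
      then have k: "k = n + 1" using assms a b by simp
      define W where "W j = (fa_word (GA # replicate k GC @ [xvar j]) :: 'a fa)" for j
      define A where "A j = (fa_word (GA # xvar j # replicate k GC) :: 'a fa)" for j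
      have G: "A 1 + A 2 + A 3 \<in> Id x (n+3)"
        using Id_gen[OF rel_al, where u="[]" and v="replicate k GC" and x=x and m="n+3"] k
        by (simp add: fa_mult_simps A_def xvar_def)
      have D: "A j - fa_scale (lam x j ^ k) (W j) \<in> Id x (n+3)" if "j \<in> {1,2,3}" for j
        using comm_shift[OF that, where u="[GA]" and k=k and t="[]" and x=x] k by (simp add: A_def W_def eval_nat_numeral)
      have eq: "W 3 = (A 1 + A 2 + A 3) - (A 1 - fa_scale (lam x 1 ^ k) (W 1))
            - (A 2 - fa_scale (lam x 2 ^ k) (W 2)) - (A 3 - fa_scale (lam x 3 ^ k) (W 3))
            - fa_scale (lam x 1 ^ k) (W 1) - fa_scale (lam x 2 ^ k) (W 2)"
        by (simp add: fun_eq_iff fa_scale_def lam_def algebra_simps)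
      have "fa_word (nw (True,n+1,1,False)) \<in> SS x n" "fa_word (nw (True,n+1,2,False)) \<in> SS x n"
        by (rule SS_BM, simp add: BM_def)+
      then have w1: "W 1 \<in> SS x n" "W 2 \<in> SS x n" by (simp_all add: W_def xvar_def k)
      have "(A 1 + A 2 + A 3) - (A 1 - fa_scale (lam x 1 ^ k) (W 1))
            - (A 2 - fa_scale (lam x 2 ^ k) (W 2)) - (A 3 - fa_scale (lam x 3 ^ k) (W 3))
            - fa_scale (lam x 1 ^ k) (W 1) - fa_scale (lam x 2 ^ k) (W 2) \<in> SS x n"
        by (intro sp SS_Id G D w1) auto
      then have "W 3 \<in> SS x n" unfolding eq[symmetric] .
      then show ?thesis using True a b k by (simp add: W_def)
    qed
  next
    assume a: "\<not> a" and b: b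
    show ?thesis
    proof (cases "i \<le> 1")
      case True then show ?thesis using assms a b i by (intro SS_BM) (auto simp: BM_def)
    next
      case False
      then have k: "k = n + 1" using assms a b by simp
      define W where "W j = (fa_word (replicate k GC @ [xvar j, GB]) :: 'a fa)" for j
      have r2: "W 1 + W 2 \<in> Id x (n+3)"
        using Id_gen[OF rel_rb2, where u="replicate k GC" and v="[]" and x=x and m="n+3"] k
        by (simp add: fa_mult_simps W_def xvar_def)
      have r3: "W 1 + W 3 \<in> Id x (n+3)"
        using Id_gen[OF rel_rb3, where u="replicate k GC" and v="[]" and x=x and m="n+3"] k
        by (simp add: fa_mult_simps W_def xvar_def)
      have "fa_word (nw (False,n+1,1,True)) \<in> SS x n"
        by (rule SS_BM, simp add: BM_def)
      then have w1: "W 1 \<in> SS x n" by (simp add: W_def xvar_def k)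
      have "W 2 = (W 1 + W 2) - W 1" "W 3 = (W 1 + W 3) - W 1" by simp_all
      then have "W 2 \<in> SS x n" "W 3 \<in> SS x n" using w1 r2 r3 by (metis SS_Id fa.span_diff)+
      then show ?thesis using False i a b k by (auto simp: W_def)
    qed
  next
    assume a: "\<not> a" and b: "\<not> b"
    show ?thesis using assms a b i by (intro SS_BM) (auto simp: BM_def)
  qed
qed

lemma fa_sum_apply: "finite A \<Longrightarrow> (sum F A :: 'a::field fa) w = (\<Sum>a\<in>A. F a w)"
  by (induction A rule: finite_induct) auto

lemma word_in_SS: "length w = n + 3 \<Longrightarrow> fa_word w \<in> (SS x n :: 'a::field fa set)"
proof -
  assume lw: "length w = n + 3"
  obtain l a k i b where m: "mon x w = (l,(a,k,i,b))" by (cases "mon x w") auto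
  have R: "fa_word w - fa_scale l (fa_word (nw (a,k,i,b))) \<in> SS x n"
    using red_word[of w x] m lw by (simp add: SS_Id)
  have N: "fa_scale l (fa_word (nw (a,k,i,b))) \<in> SS x n"
  proof (cases "l = 0")
    case True then show ?thesis by (simp add: fa.span_zero)
  next
    case False
    have "i \<le> 3" using mon_i_le3[of x w] m by simp
    moreover have "deg (a,k,i,b) = n + 3" using mon_deg[of x w] m False lw by simp
    ultimately show ?thesis by (intro fa.span_scale normal_in_SS)
  qed
  have "fa_word w = (fa_word w - fa_scale l (fa_word (nw (a,k,i,b)))) + fa_scale l (fa_word (nw (a,k,i,b)))"
    by simp
  then show ?thesis using R N by (metis fa.span_add)
qed

lemma free_in_SS: "f \<in> free_deg (n+3) \<Longrightarrow> f \<in> (SS x n :: 'a::field fa set)"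
proof -
  assume f: "f \<in> free_deg (n+3)"
  have "f = (\<Sum>w\<in>{w. length w = n+3}. fa_scale (f w) (fa_word w))"
  proof
    fix w0
    have e: "\<And>w. fa_scale (f w) (fa_word w) w0 = (if w = w0 then f w0 else 0)" by (simp add: fa_scale_def fa_word_def)
    have "(\<Sum>w\<in>{w. length w = n+3}. fa_scale (f w) (fa_word w)) w0 = (\<Sum>w\<in>{w. length w = n+3}. if w = w0 then f w0 else 0)"
      by (simp only: fa_sum_apply[OF finite_words] e)
    also have "\<dots> = (if w0 \<in> {w. length w = n+3} then f w0 else 0)"
      by (simp add: finite_words)
    also have "\<dots> = f w0" using f by (auto simp: free_deg_def)
    finally show "f w0 = (\<Sum>w\<in>{w. length w = n+3}. fa_scale (f w) (fa_word w)) w0" by simp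
  qed
  also have "\<dots> \<in> SS x n"
    by (intro fa.span_sum fa.span_scale word_in_SS) simp
  finally show ?thesis .
qed


fun red :: "'a::field \<Rightarrow> mono \<Rightarrow> mono \<Rightarrow> 'a" where
  "red x (a,k,i,b) M0 =
    (if a \<and> \<not> b \<and> i = 3 then - ((x + 1) ^ k * (if M0 = (True,k,1,False) then 1 else 0)) - x ^ k * (if M0 = (True,k,2,False) then 1 else 0)
     else if \<not> a \<and> b \<and> (i = 2 \<or> i = 3) then - (if M0 = (False,k,1,True) then 1 else 0)
     else if a \<and> b \<and> i \<noteq> 0 then (if eps x k then (if i = 1 then 1 else -1) * (if M0 = (True,k,1,True) then 1 else 0) else 0)
     else if M0 = (a,k,i,b) then 1 else 0)"

definition phi :: "'a::field \<Rightarrow> mono \<Rightarrow> gen list \<Rightarrow> 'a" where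
  "phi x M0 w = fst (mon x w) * red x (snd (mon x w)) M0"

definition Phi :: "'a::field \<Rightarrow> nat \<Rightarrow> mono \<Rightarrow> 'a fa \<Rightarrow> 'a" where
  "Phi x m M0 f = (\<Sum>w\<in>{w. length w = m}. f w * phi x M0 w)"

lemma Phi_add: "Phi x m M0 (f + g) = Phi x m M0 f + Phi x m M0 g"
  by (simp add: Phi_def sum.distrib algebra_simps)
lemma Phi_diff: "Phi x m M0 (f - g) = Phi x m M0 f - Phi x m M0 g"
  by (simp add: Phi_def sum_subtractf algebra_simps)
lemma Phi_scale: "Phi x m M0 (fa_scale c f) = c * Phi x m M0 f"
  by (simp add: Phi_def fa_scale_def sum_distrib_left algebra_simps)
lemma Phi_zero: "Phi x m M0 0 = 0"
  by (simp add: Phi_def)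
lemma Phi_word: "Phi x m M0 (fa_word w) = (if length w = m then phi x M0 w else 0)"
proof -
  have "Phi x m M0 (fa_word w) = (\<Sum>w'\<in>{w. length w = m}. if w' = w then phi x M0 w else 0)"
    unfolding Phi_def by (intro sum.cong refl) (auto simp: fa_word_def)
  also have "\<dots> = (if length w = m then phi x M0 w else 0)"
    by (simp add: finite_words)
  finally show ?thesis .
qed

lemma phi_app: "phi x M0 (u @ w) = fst (mul x (mon x u) (mon x w)) * red x (snd (mul x (mon x u) (mon x w))) M0"
  by (simp add: phi_def mon_append)

lemma phi_zero: "fst (mon x s) = 0 \<Longrightarrow> phi x M0 (u @ s @ v) = 0"
  by (simp add: phi_def mon_append mul_def)

lemma kill_al:
  fixes x :: "'a::field" and P Q :: "'a \<times> mono"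
  defines "A \<equiv> \<lambda>j. mul x P (mul x (1,(True,0,0,False)) (mul x (1,(False,0,j,False)) Q))"
  shows "fst (A 1) * red x (snd (A 1)) M0 + fst (A 2) * red x (snd (A 2)) M0 + fst (A 3) * red x (snd (A 3)) M0 = 0"
proof -
  obtain p a1 k1 i1 b1 where P: "P = (p,a1,k1,i1,b1)" by (cases P) auto
  obtain q a3 k3 i3 b3 where Q: "Q = (q,a3,k3,i3,b3)" by (cases Q) auto
  show ?thesis
  proof (cases "ne (a1,k1,i1,b1) \<or> a3 \<or> i3 \<noteq> 0")
    case True
    have "fst (A j) = 0" if "j \<noteq> 0" for j
      using True that unfolding A_def P Q mul_def by auto
    then show ?thesis by simp
  next
    case False
    then have e: "A j = (p * q * lam x j ^ k3, (True, k3, j, b3))" if "j \<noteq> 0" for j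
      using that by (simp add: A_def P Q mul_def)
    have l: "lam x 1 = x + 1" "lam x 2 = x" "lam x 3 = 1" by (simp_all add: lam_def)
    show ?thesis
    proof (cases b3)
      case True
      then show ?thesis by (simp add: e lam_def eps_def algebra_simps)
    next
      case False
      then show ?thesis by (simp add: e lam_def algebra_simps)
    qed
  qed
qed

lemma kill_rb:
  fixes x :: "'a::field" and P Q :: "'a \<times> mono"
  defines "A \<equiv> \<lambda>j. mul x P (mul x (1,(False,0,j,False)) (mul x (1,(False,0,0,True)) Q))"
  shows "(c + d) * (fst (A 1) * red x (snd (A 1)) M0) + c * (fst (A 2) * red x (snd (A 2)) M0) + d * (fst (A 3) * red x (snd (A 3)) M0) = 0"
proof -
  obtain p a1 k1 i1 b1 where P: "P = (p,a1,k1,i1,b1)" by (cases P) auto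
  obtain q a3 k3 i3 b3 where Q: "Q = (q,a3,k3,i3,b3)" by (cases Q) auto
  show ?thesis
  proof (cases "ne (a3,k3,i3,b3) \<or> b1 \<or> i1 \<noteq> 0")
    case True
    have "fst (A j) = 0" if "j \<noteq> 0" for j
      using True that unfolding A_def P Q mul_def by auto
    then show ?thesis by simp
  next
    case False
    then have e: "A j = (p * q, (a1, k1, j, True))" if "j \<noteq> 0" for j
      using that by (simp add: A_def P Q mul_def)
    show ?thesis
    proof (cases a1)
      case True
      then show ?thesis by (simp add: e algebra_simps)
    next
      case False
      then show ?thesis by (simp add: e algebra_simps)
    qed
  qed
qed

lemma kill_cm:
  fixes x :: "'a::field" and P Q :: "'a \<times> mono"
  assumes "j \<noteq> 0"
  shows "fst (mul x P (mul x (1,(False,0,j,False)) (mul x (1,(False,1,0,False)) Q))) * red x (snd (mul x P (mul x (1,(False,0,j,False)) (mul x (1,(False,1,0,False)) Q)))) M0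
    - lam x j * (fst (mul x P (mul x (1,(False,1,0,False)) (mul x (1,(False,0,j,False)) Q))) * red x (snd (mul x P (mul x (1,(False,1,0,False)) (mul x (1,(False,0,j,False)) Q)))) M0) = 0"
proof -
  obtain q a3 k3 i3 b3 where Q: "Q = (q,a3,k3,i3,b3)" by (cases Q) auto
  define E2 where "E2 = mul x (1,(False,1,0,False)) (mul x (1,(False,0,j,False)) Q)"
  have h: "mul x (1,(False,0,j,False)) (mul x (1,(False,1,0,False)) Q) = (lam x j * fst E2, snd E2)"
    using assms by (auto simp: Q mul_def power_Suc E2_def)
  show ?thesis unfolding h E2_def[symmetric] by (simp add: mul_def algebra_simps)
qed

lemma comm_eq: "i \<in> {1,2,3} \<Longrightarrow> fa_mult (lin (evec i)) (fa_word [GC]) - fa_mult (fa_word [GC]) (lin (sig x (evec i)))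
     = fa_word [xvar i, GC] - fa_scale (lam x i) (fa_word [GC, xvar i])"
  by (auto simp: evec_def sig_def lin_expand fa_mult_simps lam_def xvar_def)

lemma rel_cases:
  assumes "r \<in> Rel x"
  obtains (xx) i j where "r = fa_word [xvar i, xvar j]"
  | (ya) y where "r = fa_word [y, GA]"
  | (yb) y where "r = fa_word [GB, y]"
  | (al) t where "r = fa_scale t (fa_word [GA,X1]) + fa_scale t (fa_word [GA,X2]) + fa_scale t (fa_word [GA,X3])"
  | (rb) c d where "r = fa_scale (c + d) (fa_word [X1,GB]) + fa_scale c (fa_word [X2,GB]) + fa_scale d (fa_word [X3,GB])"
  | (cm) i where "i \<in> {1,2,3}" "r = fa_word [xvar i, GC] - fa_scale (lam x i) (fa_word [GC, xvar i])"
proof -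
  from assms consider (xx) i j where "r = fa_word [xvar i, xvar j]"
  | (ya) y where "r = fa_word [y, GA]"
  | (yb) y where "r = fa_word [GB, y]"
  | (al) l where "r = fa_mult (fa_word [GA]) (lin l)" "l \<in> Ls"
  | (rb) \<rho> where "r = fa_mult (lin \<rho>) (fa_word [GB])" "\<rho> \<in> Rs"
  | (cm) i where "i \<in> {1,2,3}" "r = fa_mult (lin (evec i)) (fa_word [GC]) - fa_mult (fa_word [GC]) (lin (sig x (evec i)))"
    unfolding rels_def by blast
  then show ?thesis
  proof cases
    case (al l)
    then obtain t where "l = (t,t,t)" by (auto simp: Ls_def)
    then show ?thesis using al that(4)[of t] by (simp add: lin_expand fa_mult_simps)
  next
    case (rb \<rho>)
    then obtain c d where "\<rho> = (c + d, c, d)" by (auto simp: Rs_def)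
    then show ?thesis using rb that(5)[of c d] by (simp add: lin_expand fa_mult_simps)
  next
    case (cm i)
    then show ?thesis using that(6)[of i] comm_eq[of i x] by simp
  qed (use that in blast)+
qed

lemma Phi_gen:
  assumes r: "r \<in> Rel x" and len: "length u + 2 + length v = m"
  shows "Phi x m M0 (fa_mult (fa_word u) (fa_mult r (fa_word v))) = 0"
  using r
proof (cases rule: rel_cases)
  case (xx i j)
  have "fst (mon x [xvar i, xvar j]) = 0" by (simp add: mul_def xvar_def)
  moreover have "fa_mult (fa_word u) (fa_mult r (fa_word v)) = fa_word (u @ [xvar i, xvar j] @ v)"
    by (simp only: xx fa_mult_simps)
  ultimately show ?thesis using len by (simp only: Phi_word phi_zero) simp
next
  case (ya y)
  have "fst (mon x [y, GA]) = 0" by (cases y) (simp_all add: mul_def)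
  moreover have "fa_mult (fa_word u) (fa_mult r (fa_word v)) = fa_word (u @ [y, GA] @ v)"
    by (simp only: ya fa_mult_simps)
  ultimately show ?thesis using len by (simp only: Phi_word phi_zero) simp
next
  case (yb y)
  have "fst (mon x [GB, y]) = 0" by (cases y) (simp_all add: mul_def)
  moreover have "fa_mult (fa_word u) (fa_mult r (fa_word v)) = fa_word (u @ [GB, y] @ v)"
    by (simp only: yb fa_mult_simps)
  ultimately show ?thesis using len by (simp only: Phi_word phi_zero) simp
next
  case (al t)
  show ?thesis using len kill_al[where x=x and P="mon x u" and Q="mon x v"]
    by (simp add: al fa_mult_simps Phi_add Phi_scale Phi_word phi_app distrib_left[symmetric])
next
  case (rb c d)
  show ?thesis using len kill_rb[where x=x and P="mon x u" and Q="mon x v" and c=c and d=d]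
    by (simp add: rb fa_mult_simps Phi_add Phi_scale Phi_word phi_app)
next
  case (cm i)
  have j: "i \<noteq> 0" and gi: "gm (xvar i) = (False,0,i,False)" using cm(1) by (auto simp: xvar_def)
  show ?thesis using len kill_cm[OF j, where x=x and P="mon x u" and Q="mon x v"]
    by (simp add: cm(2) fa_mult_simps Phi_diff Phi_scale Phi_word phi_app gi)
qed


lemma Phi_Id: "f \<in> Id x m \<Longrightarrow> Phi x m M0 f = 0"
proof -
  assume f: "f \<in> Id x m"
  have "Id x m \<subseteq> {f. Phi x m M0 f = 0}"
    unfolding ideal_deg_def
    by (rule fa.span_minimal) (auto simp: fa.subspace_def Phi_add Phi_scale Phi_zero intro: Phi_gen)
  then show ?thesis using f by blast
qed

lemma free_subspace: "fa.subspace (free_deg m :: 'a::field fa set)"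
  by (auto simp: fa.subspace_def free_deg_def fa_scale_def)

lemma gen_free:
  assumes r: "r \<in> Rel x" and len: "length u + 2 + length v = m"
  shows "fa_mult (fa_word u) (fa_mult r (fa_word v)) \<in> free_deg m"
  using r
proof (cases rule: rel_cases)
  case (xx i j) then show ?thesis using len unfolding xx fa_mult_simps by (auto simp: free_deg_def fa_word_def)
next
  case (ya y) then show ?thesis using len unfolding ya fa_mult_simps by (auto simp: free_deg_def fa_word_def)
next
  case (yb y) then show ?thesis using len unfolding yb fa_mult_simps by (auto simp: free_deg_def fa_word_def)
next
  case (al t) then show ?thesis using len unfolding al fa_mult_simps by (auto simp: free_deg_def fa_word_def fa_scale_def)
next
  case (rb c d) then show ?thesis using len unfolding rb fa_mult_simps by (auto simp: free_deg_def fa_word_def fa_scale_def)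
next
  case (cm i) then show ?thesis using len unfolding cm(2) fa_mult_simps by (auto simp: free_deg_def fa_word_def fa_scale_def)
qed

lemma Id_free: "Id x m \<subseteq> free_deg m"
  unfolding ideal_deg_def
  by (rule fa.span_minimal[OF _ free_subspace]) (auto intro: gen_free)

lemma BM_deg: "M \<in> BM x n \<Longrightarrow> deg M = n + 3"
  unfolding BM_def by (auto split: if_splits)

lemma BM_i: "M \<in> BM x n \<Longrightarrow> fst (snd (snd M)) \<le> 3"
  unfolding BM_def by (auto split: if_splits)

lemma len_nw_BM: "M \<in> BM x n \<Longrightarrow> length (nw M) = n + 3"
  by (simp only: length_nw BM_deg)

lemma BQ_free: "BQ x n \<subseteq> free_deg (n+3)"
proof
  fix f assume "f \<in> BQ x n"
  then obtain M where M: "M \<in> BM x n" "f = fa_word (nw M)" by (auto simp: BQ_def)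
  then show "f \<in> free_deg (n+3)" using len_nw_BM[OF M(1)] by (auto simp: free_deg_def fa_word_def)
qed

lemma SS_eq: "SS x n = (free_deg (n+3) :: 'a::field fa set)"
proof
  show "SS x n \<subseteq> free_deg (n+3)"
    by (rule fa.span_minimal[OF _ free_subspace]) (use Id_free BQ_free in blast)
  show "free_deg (n+3) \<subseteq> SS x n" using free_in_SS by blast
qed

lemma mon_rep: "mon x (replicate k GC) = (1, (False,k,0,False))"
  by (induction k) (auto simp: mul_def)

lemma mon_nw: "i \<le> 3 \<Longrightarrow> mon x (nw (a,k,i,b)) = (1,(a,k,i,b))"
  by (cases a; cases b; cases "i = 0") (auto simp: nw.simps mon_append mon_rep mul_def xvar_def)

lemma red_BM: "M \<in> BM x n \<Longrightarrow> red x M M0 = (if M0 = M then 1 else 0)"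
  by (auto simp: BM_def split: if_splits)

lemma phi_BM: "M \<in> BM x n \<Longrightarrow> phi x M0 (nw M) = (if M0 = M then 1 else 0)"
proof -
  assume M: "M \<in> BM x n"
  obtain a k i b where Mq: "M = (a,k,i,b)" by (cases M) auto
  have "i \<le> 3" using BM_i[OF M] Mq by simp
  then show ?thesis using red_BM[OF M] by (simp add: phi_def Mq mon_nw)
qed

definition dec :: "gen list \<Rightarrow> mono" where
  "dec w = (GA \<in> set w, length (filter (\<lambda>g. g = GC) w),
     (if X1 \<in> set w then 1 else if X2 \<in> set w then 2 else if X3 \<in> set w then 3 else 0), GB \<in> set w)"

lemma filter_rep_GC: "filter (\<lambda>g. g = GC) (replicate k GC) = replicate k GC"
  by (induction k) auto

lemma dec_nw: "i \<le> 3 \<Longrightarrow> dec (nw (a,k,i,b)) = (a,k,i,b)"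
proof -
  assume "i \<le> 3"
  then have "i = 0 \<or> i = 1 \<or> i = 2 \<or> i = 3" by auto
  then show ?thesis
    by (cases a; cases b) (auto simp: nw.simps dec_def xvar_def filter_rep_GC)
qed

lemma nw_inj: "inj_on nw (BM x n)"
proof (rule inj_on_inverseI)
  fix M assume M: "M \<in> BM x n"
  obtain a k i b where Mq: "M = (a,k,i,b)" by (cases M) auto
  show "dec (nw M) = M" using BM_i[OF M] Mq dec_nw by simp
qed

lemma fa_word_inj: "fa_word u = (fa_word v :: 'a::field fa) \<Longrightarrow> u = v"
  by (metis fa_word_def one_neq_zero)

lemma finite_BM: "finite (BM x n)"
  by (simp add: BM_def)

lemma card_BM: "card (BM x n) = (if eps x n then 11 else 10)"
  by (simp add: BM_def)

lemma card_BQ: "card (BQ x n :: 'a::field fa set) = card (BM (x::'a) n)"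
proof -
  have "inj_on (fa_word :: gen list \<Rightarrow> 'a fa) (nw ` BM x n)" by (auto intro: inj_onI fa_word_inj)
  then have "card (BQ x n :: 'a fa set) = card (nw ` BM x n)" by (simp add: BQ_def card_image)
  also have "\<dots> = card (BM x n)" by (rule card_image[OF nw_inj])
  finally show ?thesis .
qed

lemma span_BQ_supp: "q \<in> fa.span (BQ x n) \<Longrightarrow> w \<notin> nw ` BM x n \<Longrightarrow> q w = 0"
proof -
  assume q: "q \<in> fa.span (BQ x n)" and w: "w \<notin> nw ` BM x n"
  have "fa.span (BQ x n) \<subseteq> {f. f w = 0}"
    by (rule fa.span_minimal) (use w in \<open>auto simp: BQ_def fa_word_def fa.subspace_def fa_scale_def\<close>)
  then show ?thesis using q by blast
qed

lemma inter_zero: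
  assumes qI: "q \<in> Id x (n+3)" and qB: "q \<in> fa.span (BQ x n)"
  shows "q = 0"
proof
  fix w
  show "q w = 0 w"
  proof (cases "w \<in> nw ` BM x n")
    case False then show ?thesis using span_BQ_supp[OF qB] by simp
  next
    case True
    then obtain M0 where M0: "M0 \<in> BM x n" "w = nw M0" by blast
    have "0 = Phi x (n+3) M0 q" using Phi_Id[OF qI] by simp
    also have "\<dots> = (\<Sum>w\<in>nw ` BM x n. q w * phi x M0 w)"
      unfolding Phi_def
      by (rule sum.mono_neutral_right)
         (auto simp: finite_words len_nw_BM span_BQ_supp[OF qB])
    also have "\<dots> = (\<Sum>M\<in>BM x n. q (nw M) * phi x M0 (nw M))"
      by (rule sum.reindex[OF nw_inj, unfolded comp_def])
    also have "\<dots> = (\<Sum>M\<in>BM x n. if M = M0 then q (nw M0) else 0)"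
      by (rule sum.cong) (auto simp: phi_BM)
    also have "\<dots> = q (nw M0)" using M0(1) by (simp add: finite_BM)
    finally show ?thesis using M0 by simp
  qed
qed

lemma indep_BQ: "fa.independent (BQ x n :: 'a::field fa set)"
proof (rule fa.independent_if_scalars_zero)
  show fin: "finite (BQ x n :: 'a fa set)" by (simp add: BQ_def finite_BM)
  fix c v assume s: "(\<Sum>v\<in>BQ x n. fa_scale (c v) v) = (0 :: 'a fa)" and v: "v \<in> BQ x n"
  obtain w0 where v0: "v = fa_word w0" using v by (auto simp: BQ_def)
  have "0 = (\<Sum>v\<in>BQ x n. fa_scale (c v) v) w0" using s by simp
  also have "\<dots> = (\<Sum>u\<in>BQ x n. if u = v then c v else 0)"
  proof (simp only: fa_sum_apply[OF fin], intro sum.cong refl)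
    fix u assume "u \<in> BQ x n"
    then obtain w where u: "u = fa_word w" by (auto simp: BQ_def)
    show "fa_scale (c u) u w0 = (if u = v then c v else 0)"
      using fa_word_inj[of w w0] by (auto simp: u v0 fa_scale_def fa_word_def)
  qed
  also have "\<dots> = c v" using v fin by simp
  finally show "c v = 0" by simp
qed

lemma free_span: "free_deg m \<subseteq> fa.span (fa_word ` {w. length w = m} :: 'a::field fa set)"
proof
  fix f :: "'a fa" assume f: "f \<in> free_deg m"
  have "f = (\<Sum>w\<in>{w. length w = m}. fa_scale (f w) (fa_word w))"
  proof
    fix w0
    have e: "\<And>w. fa_scale (f w) (fa_word w) w0 = (if w = w0 then f w0 else 0)" by (simp add: fa_scale_def fa_word_def)
    have "(\<Sum>w\<in>{w. length w = m}. fa_scale (f w) (fa_word w)) w0 = (\<Sum>w\<in>{w. length w = m}. if w = w0 then f w0 else 0)"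
      by (simp only: fa_sum_apply[OF finite_words] e)
    also have "\<dots> = (if w0 \<in> {w. length w = m} then f w0 else 0)"
      by (simp add: finite_words)
    also have "\<dots> = f w0" using f by (auto simp: free_deg_def)
    finally show "f w0 = (\<Sum>w\<in>{w. length w = m}. fa_scale (f w) (fa_word w)) w0" by simp
  qed
  also have "\<dots> \<in> fa.span (fa_word ` {w. length w = m})"
    by (intro fa.span_sum fa.span_scale fa.span_base) auto
  finally show "f \<in> fa.span (fa_word ` {w. length w = m})" .
qed

lemma hilb_main: "hilbA Ls Rs (sig x) (n + 3) = (if eps (x::'a::field) n then 11 else 10)"
proof -
  let ?S = "Id x (n+3)" and ?Q = "BQ x n"
  obtain B where B: "B \<subseteq> ?S" "fa.independent B" "?S \<subseteq> fa.span B" "card B = fa.dim ?S"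
    using fa.basis_exists by blast
  have finB: "finite B"
  proof -
    have "B \<subseteq> fa.span (fa_word ` {w. length w = n+3})" using B(1) Id_free free_span by blast
    then show ?thesis using fa.independent_span_bound[OF _ B(2)] finite_words by blast
  qed
  have finQ: "finite ?Q" by (simp add: BQ_def finite_BM)
  have sS: "fa.subspace ?S" by (simp add: ideal_deg_def)
  have spB: "fa.span B = ?S"
    using B(1,3) sS by (meson fa.span_minimal fa.span_subspace)
  have spBS: "fa.span B \<subseteq> ?S" using spB by simp
  have disj: "B \<inter> ?Q = {}"
  proof (rule ccontr)
    assume "B \<inter> ?Q \<noteq> {}"
    then obtain b where b: "b \<in> B" "b \<in> ?Q" by blast
    then have "b = 0" using inter_zero[of b x n] B(1) fa.span_base[of b ?Q] by blast
    moreover obtain w where "b = fa_word w" using b by (auto simp: BQ_def)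
    ultimately show False by (metis fa_word_def one_neq_zero zero_fun_apply)
  qed
  have indep: "fa.independent (B \<union> ?Q)"
  proof (rule fa.independent_if_scalars_zero)
    show "finite (B \<union> ?Q)" using finB finQ by simp
    fix f v assume s: "(\<Sum>x\<in>B \<union> ?Q. fa_scale (f x) x) = 0" and v: "v \<in> B \<union> ?Q"
    have split: "(\<Sum>x\<in>B \<union> ?Q. fa_scale (f x) x) = (\<Sum>x\<in>B. fa_scale (f x) x) + (\<Sum>x\<in>?Q. fa_scale (f x) x)"
      by (rule sum.union_disjoint[OF finB finQ disj])
    have inS: "(\<Sum>x\<in>B. fa_scale (f x) x) \<in> ?S"
      using spBS by (intro subsetD[OF spBS] fa.span_sum fa.span_scale fa.span_base) auto
    have inQ: "(\<Sum>x\<in>B. fa_scale (f x) x) \<in> fa.span ?Q"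
    proof -
      have "(\<Sum>x\<in>B. fa_scale (f x) x) = - (\<Sum>x\<in>?Q. fa_scale (f x) x)"
        using s split by (simp add: eq_neg_iff_add_eq_0)
      also have "\<dots> \<in> fa.span ?Q"
        by (intro fa.span_neg fa.span_sum fa.span_scale fa.span_base)
      finally show ?thesis .
    qed
    have zB: "(\<Sum>x\<in>B. fa_scale (f x) x) = 0" by (rule inter_zero[OF inS inQ])
    have zQ: "(\<Sum>x\<in>?Q. fa_scale (f x) x) = 0" using s split zB by simp
    show "f v = 0"
    proof (cases "v \<in> B")
      case True then show ?thesis using fa.independentD[OF B(2) finB subset_refl zB] by simp
    next
      case False then have "v \<in> ?Q" using v by simp
      then show ?thesis using fa.independentD[OF indep_BQ finQ subset_refl zQ] by simp
    qed
  qed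
  have e1: "fa.span ?S = ?S" using sS by (simp only: fa.span_eq_iff)
  have "fa.span (B \<union> ?Q) = {a + b | a b. a \<in> fa.span B \<and> b \<in> fa.span ?Q}" by (rule fa.span_Un)
  also have "\<dots> = {a + b | a b. a \<in> ?S \<and> b \<in> fa.span ?Q}" by (simp only: spB)
  also have "\<dots> = {a + b | a b. a \<in> fa.span ?S \<and> b \<in> fa.span ?Q}" by (simp only: e1)
  also have "\<dots> = SS x n" by (rule fa.span_Un[symmetric])
  finally have "fa.span (B \<union> ?Q) = SS x n" .
  then have spF: "fa.span (B \<union> ?Q) = fa.span (free_deg (n+3))"
    using SS_eq free_subspace by (metis fa.span_eq_iff)
  have "fa.dim (free_deg (n+3) :: 'a fa set) = card (B \<union> ?Q)"
    by (rule fa.dim_eq_card[OF spF indep])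
  also have "\<dots> = card B + card ?Q" by (rule card_Un_disjoint[OF finB finQ disj])
  finally show ?thesis using B(4) by (simp add: hilbA_def card_BQ card_BM)
qed


lemma frob:
  fixes a b :: "'a::comm_ring_1"
  assumes p: "prime p" and cp: "CHAR('a) = p"
  shows "(a + b) ^ p = a ^ p + b ^ p"
proof -
  have p0: "p \<noteq> 0" using p by auto
  have "(a + b) ^ p = (\<Sum>k\<le>p. of_nat (p choose k) * a ^ k * b ^ (p - k))"
    by (rule binomial_ring)
  also have "\<dots> = (\<Sum>k\<in>{0, p}. of_nat (p choose k) * a ^ k * b ^ (p - k))"
  proof (rule sum.mono_neutral_right)
    show "\<forall>k\<in>{..p} - {0, p}. of_nat (p choose k) * a ^ k * b ^ (p - k) = 0"
    proof
      fix k assume k: "k \<in> {..p} - {0, p}"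
      then have "p dvd (p choose k)" using dvd_choose_prime[of k p] p by auto
      then have "(of_nat (p choose k) :: 'a) = 0" using cp by (simp add: of_nat_eq_0_iff_char_dvd)
      then show "of_nat (p choose k) * a ^ k * b ^ (p - k) = 0" by simp
    qed
  qed auto
  also have "\<dots> = a ^ p + b ^ p" using p0 by (simp add: add.commute)
  finally show ?thesis .
qed

lemma frob_pow:
  fixes a b :: "'a::comm_ring_1"
  assumes p: "prime p" and cp: "CHAR('a) = p"
  shows "(a + b) ^ (p ^ k) = a ^ (p ^ k) + b ^ (p ^ k)"
proof (induction k)
  case 0 then show ?case by simp
next
  case (Suc k)
  have "(a + b) ^ (p ^ Suc k) = ((a + b) ^ (p ^ k)) ^ p" by (simp only: power_Suc2 power_mult)
  also have "\<dots> = (a ^ (p ^ k) + b ^ (p ^ k)) ^ p" using Suc by simp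
  also have "\<dots> = (a ^ (p ^ k)) ^ p + (b ^ (p ^ k)) ^ p" by (rule frob[OF p cp])
  also have "\<dots> = a ^ (p ^ Suc k) + b ^ (p ^ Suc k)" by (simp only: power_Suc2 power_mult)
  finally show ?case .
qed

lemma factor_p: "1 < (p::nat) \<Longrightarrow> 0 < n \<Longrightarrow> \<exists>v r. n = p ^ v * r \<and> \<not> p dvd r"
proof (induction n rule: less_induct)
  case (less n)
  show ?case
  proof (cases "p dvd n")
    case True
    then obtain m where m: "n = p * m" by blast
    then have "0 < m" "m < n" using less.prems by auto
    then obtain v r where "m = p ^ v * r" "\<not> p dvd r" using less.IH less.prems by blast
    then show ?thesis using m by (intro exI[of _ "Suc v"] exI[of _ r]) simp
  next
    case False then show ?thesis by (intro exI[of _ 0] exI[of _ n]) simp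
  qed
qed

lemma eps_iff:
  fixes x :: "'a::field" and p :: nat
  assumes charp: "CHAR('a) = p" and ppos: "p > 0"
    and transc: "\<And>q :: 'a poly. q \<noteq> 0 \<Longrightarrow> (\<forall>i. coeff q i \<in> range of_nat) \<Longrightarrow> poly q x \<noteq> 0"
  shows "eps x n \<longleftrightarrow> (\<exists>k. n = p ^ k)"
proof -
  have p: "prime p" using prime_CHAR_semidom[of] charp ppos by (metis prime_CHAR_semidom)
  then have p1: "1 < p" using prime_gt_1_nat by blast
  show ?thesis
  proof
    assume "\<exists>k. n = p ^ k"
    then obtain k where "n = p ^ k" by blast
    then show "eps x n" using frob_pow[OF p charp, of x 1 k] by (simp add: eps_def)
  next
    assume e: "eps x n"
    have n0: "n \<noteq> 0"
    proof
      assume "n = 0"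
      then have "(1::'a) + 0 = 1 + 1" using e by (simp add: eps_def)
      then have "(0::'a) = 1" by (rule add_left_imp_eq)
      then show False by simp
    qed
    obtain v r where nr: "n = p ^ v * r" and pr: "\<not> p dvd r" using factor_p[OF p1] n0 by blast
    define P where "P = p ^ v"
    define y where "y = x ^ P"
    have P0: "P > 0" using p1 by (simp add: P_def)
    have r0: "r \<noteq> 0" using nr n0 by auto
    have yr: "(y + 1) ^ r = y ^ r + 1"
    proof -
      have "(x + 1) ^ P = y + 1" using frob_pow[OF p charp, of x 1 v] by (simp add: P_def y_def)
      then have "(x + 1) ^ n = (y + 1) ^ r" by (simp add: nr P_def[symmetric] power_mult)
      moreover have "x ^ n = y ^ r" by (simp add: nr P_def[symmetric] y_def power_mult)
      ultimately show ?thesis using e by (simp add: eps_def)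
    qed
    have "r = 1"
    proof (rule ccontr)
      assume "r \<noteq> 1"
      then have r2: "2 \<le> r" using r0 by auto
      define q :: "'a poly" where "q = (\<Sum>j\<in>{1..<r}. monom (of_nat (r choose j)) (P * j))"
      have cq: "coeff q i = of_nat (\<Sum>j\<in>{1..<r}. if P * j = i then r choose j else 0)" for i
        unfolding q_def coeff_sum of_nat_sum by (intro sum.cong refl) simp
      have "coeff q P = of_nat r"
      proof -
        have "(\<Sum>j\<in>{1..<r}. if P * j = P then r choose j else 0) = (\<Sum>j\<in>{1..<r}. if j = 1 then r choose j else 0)"
          using P0 by (intro sum.cong refl) auto
        also have "\<dots> = r" using r2 by simp
        finally show ?thesis by (simp add: cq)
      qed
      moreover have "(of_nat r :: 'a) \<noteq> 0" using pr charp by (simp add: of_nat_eq_0_iff_char_dvd)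
      ultimately have q0: "q \<noteq> 0" by auto
      have poly_q: "poly q x = 0"
      proof -
        have "poly q x = (\<Sum>j\<in>{1..<r}. of_nat (r choose j) * y ^ j)"
          by (simp add: q_def poly_sum poly_monom y_def power_mult)
        moreover have "(y + 1) ^ r = (\<Sum>j\<in>{1..<r}. of_nat (r choose j) * y ^ j) + y ^ r + 1"
        proof -
          have s: "{..r} = insert 0 (insert r {1..<r})" using r2 by auto
          have "(y + 1) ^ r = (\<Sum>j\<le>r. of_nat (r choose j) * y ^ j * 1 ^ (r - j))"
            by (rule binomial_ring)
          also have "\<dots> = 1 + (y ^ r + (\<Sum>j\<in>{1..<r}. of_nat (r choose j) * y ^ j))"
            unfolding s using r2 by (simp add: sum.insert)
          finally show ?thesis by (simp add: algebra_simps)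
        qed
        ultimately show ?thesis using yr by simp
      qed
      have "\<forall>i. coeff q i \<in> range of_nat"
      proof
        fix i show "coeff q i \<in> range of_nat" unfolding cq[of i] by (rule rangeI)
      qed
      then show False using transc[OF q0] poly_q by simp
    qed
    then show "\<exists>k. n = p ^ k" using nr by auto
  qed
qed


lemma not_pow:
  assumes p: "1 < (p::nat)" and j: "0 < j" "j < p ^ k"
  shows "\<not> (\<exists>e. p ^ k + j = p ^ e)"
proof
  assume "\<exists>e. p ^ k + j = p ^ e"
  then obtain e where e: "p ^ k + j = p ^ e" by blast
  have "p ^ k < p ^ e" using e j by simp
  then have "k < e" using power_less_imp_less_exp[OF p] by blast
  moreover have "p ^ e < p ^ Suc k"
  proof -
    have "p ^ e < 2 * p ^ k" using e j by simp
    also have "\<dots> \<le> p * p ^ k" using p by simp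
    finally show ?thesis by simp
  qed
  then have "e < Suc k" using power_less_imp_less_exp[OF p] by blast
  ultimately show False by simp
qed

theorem proposition5p6:
  fixes x :: "'a::field" and p :: nat
  assumes charp: "CHAR('a) = p" and ppos: "p > 0"
    and transc: "\<And>q :: 'a poly. q \<noteq> 0 \<Longrightarrow> (\<forall>i. coeff q i \<in> range of_nat) \<Longrightarrow> poly q x \<noteq> 0"
  defines "\<sigma> \<equiv> (\<lambda>(v1, v2, v3). ((x + 1) * v1, x * v2, v3))"
    and "L \<equiv> {(c, c, c) | c :: 'a. True}"
    and "R \<equiv> {(c + d, c, d) | c d :: 'a. True}"
  shows "(\<forall>n. hilbA L R \<sigma> (n + 3) = (if \<exists>k. n = p ^ k then 11 else 10))
       \<and> \<not> (\<exists>T>0. \<exists>N. \<forall>n\<ge>N. hilbA L R \<sigma> (n + T) = hilbA L R \<sigma> n)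
       \<and> \<not> (\<exists>P Q :: rat poly. Q \<noteq> 0 \<and>
              fps_of_poly Q * Abs_fps (\<lambda>n. of_nat (hilbA L R \<sigma> n)) = fps_of_poly P)"
proof -
  have p: "prime p" using charp ppos by (metis prime_CHAR_semidom)
  then have p1: "1 < p" using prime_gt_1_nat by blast
  have hL: "hilbA L R \<sigma> = hilbA Ls Rs (sig x)"
    unfolding \<sigma>_def L_def R_def sig_def Ls_def Rs_def by simp
  define h where "h = hilbA L R \<sigma>"
  have H3: "h (n + 3) = (if \<exists>k. n = p ^ k then 11 else 10)" for n
    unfolding h_def hL hilb_main using eps_iff[OF charp ppos transc, of n] by simp
  have Kgt: "k < p ^ k" for k using p1 by (simp add: power_gt_expt)
  have hpow: "h (p ^ k + 3) = 11" for k using H3 by auto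
  have hnpow: "h (p ^ k + j + 3) = 10" if "0 < j" "j < p ^ k" for k j
    using H3[of "p ^ k + j"] not_pow[OF p1 that] by simp
  have part2: "\<not> (\<exists>T>0. \<exists>N. \<forall>n\<ge>N. h (n + T) = h n)"
  proof
    assume "\<exists>T>0. \<exists>N. \<forall>n\<ge>N. h (n + T) = h n"
    then obtain T N where T: "T > 0" and per: "\<forall>n\<ge>N. h (n + T) = h n" by blast
    define k where "k = T + N"
    have K: "k < p ^ k" by (rule Kgt)
    have "h (p ^ k + 3 + T) = h (p ^ k + 3)" using per K by (auto simp: k_def)
    moreover have "h (p ^ k + 3 + T) = 10" using hnpow[of T k] T K by (simp add: k_def add.commute add.left_commute)
    ultimately show False using hpow[of k] by simp
  qed
  have part3: "\<not> (\<exists>P Q :: rat poly. Q \<noteq> 0 \<and> fps_of_poly Q * Abs_fps (\<lambda>n. of_nat (h n)) = fps_of_poly P)"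
  proof
    assume "\<exists>P Q :: rat poly. Q \<noteq> 0 \<and> fps_of_poly Q * Abs_fps (\<lambda>n. of_nat (h n)) = fps_of_poly P"
    then obtain P Q :: "rat poly" where Q0: "Q \<noteq> 0" and eq: "fps_of_poly Q * Abs_fps (\<lambda>n. of_nat (h n)) = fps_of_poly P"
      by blast
    define d where "d = degree Q"
    define k where "k = d + degree P + 2"
    define K where "K = p ^ k"
    have Kk: "k < K" unfolding K_def by (rule Kgt)
    define S where "S n = (\<Sum>i=0..d. coeff Q i * of_nat (h (n - i)))" for n
    have S0: "S n = 0" if "n > degree P" "n \<ge> d" for n
    proof -
      have "coeff P n = fps_nth (fps_of_poly Q * Abs_fps (\<lambda>n. of_nat (h n))) n" using eq by simp
      also have "\<dots> = (\<Sum>i=0..n. coeff Q i * of_nat (h (n - i)))" by (simp add: fps_mult_nth)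
      also have "\<dots> = S n" unfolding S_def
        by (rule sum.mono_neutral_right) (use that in \<open>auto simp: d_def coeff_eq_0\<close>)
      finally show ?thesis using that by (simp add: coeff_eq_0)
    qed
    have "S (K + 3 + d) = 0" by (rule S0) (use Kk in \<open>auto simp: k_def\<close>)
    have "S (K + 4 + d) = 0" by (rule S0) (use Kk in \<open>auto simp: k_def\<close>)
    have pt: "of_nat (h (K + 3 + d - i)) = (of_nat (h (K + 4 + d - i)) :: rat) + (if i = d then 1 else 0)"
      if i: "i \<in> {0..d}" for i
    proof -
      have h2: "h (K + 4 + d - i) = 10"
      proof -
        have "K + 4 + d - i = p ^ k + (d - i + 1) + 3" using i by (simp add: K_def)
        moreover have "d - i + 1 < p ^ k" using Kk by (simp add: K_def k_def)
        ultimately show ?thesis using hnpow[of "d - i + 1" k] by simp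
      qed
      show ?thesis
      proof (cases "i = d")
        case True
        then have "K + 3 + d - i = p ^ k + 3" by (simp add: K_def)
        then show ?thesis using hpow[of k] h2 True by simp
      next
        case False
        then have "K + 3 + d - i = p ^ k + (d - i) + 3" using i by (simp add: K_def)
        moreover have "0 < d - i" "d - i < p ^ k" using i False Kk by (auto simp: K_def k_def)
        ultimately show ?thesis using hnpow[of "d - i" k] h2 False by simp
      qed
    qed
    have "S (K + 3 + d) = S (K + 4 + d) + (\<Sum>i=0..d. coeff Q i * (if i = d then 1 else 0))"
      unfolding S_def by (simp add: pt sum.distrib distrib_left)
    also have "(\<Sum>i=0..d. coeff Q i * (if i = d then 1 else 0)) = coeff Q d"
      by (simp add: if_distrib cong: if_cong)
    finally have "coeff Q d = 0" using \<open>S (K + 3 + d) = 0\<close> \<open>S (K + 4 + d) = 0\<close> by simp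
    then show False using Q0 by (simp add: d_def)
  qed
  show ?thesis using H3 part2 part3 unfolding h_def by blast
qed

end
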